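(* Let $t>0$ and $w(x,t)=\mathrm{e}^{-x^{2}-t/x^{2}}$ for $x\in(-\infty,\infty)$, and let $\mathrm{v}(z)=-\ln w(z,t)=z^2+t/z^2$, so $\mathrm{v}'(z)=2z-2t/z^3$. Let $P_n(x)$ be the monic polynomials of degree $n$ orthogonal with respect to $w(x,t)$ on $\mathbb{R}$, with $\int_{-\infty}^{\infty}P_m(x)P_n(x)w(x,t)\,dx=h_n\delta_{mn}$, and define $$A_{n}(z):=\frac{1}{h_{n}}\int_{-\infty}^{\infty}\frac{\mathrm{v}'(z)-\mathrm{v}'(y)}{z-y}P_{n}^{2}(y)w(y,t)dy,\qquad B_{n}(z):=\frac{1}{h_{n-1}}\int_{-\infty}^{\infty}\frac{\mathrm{v}'(z)-\mathrm{v}'(y)}{z-y}P_{n}(y)P_{n-1}(y)w(y,t)dy.$$ Then $$A_{n}(z)=2+\frac{R_{n}(t)}{z^2},\qquad B_{n}(z)=\frac{r_{n}(t)}{z}+\frac{(1-(-1)^n)t}{z^3},$$ where $$R_{n}(t):=\frac{2t}{h_{n}}\int_{-\infty}^{\infty}\frac{1}{y^2} P_{n}^{2}(y)w(y,t)dy,\qquad r_{n}(t):=\frac{2t}{h_{n-1}}\int_{-\infty}^{\infty}\frac{1}{y^3} P_{n}(y)P_{n-1}(y)w(y,t)dy.$$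
   Context: Convention: $P_{-1}=0$, so that $B_0=0$ and $r_0=0$. The weight is even, so $P_n$ contains only powers of $x$ of the same parity as $n$, and the monic orthogonal polynomials satisfy $xP_n(x)=P_{n+1}(x)+\beta_nP_{n-1}(x)$ with $\beta_n=h_n/h_{n-1}$. *)

theory Defs
  imports "HOL-Analysis.Analysis" "HOL-Computational_Algebra.Polynomial"
begin

text \<open>Weight w(x,t) = exp(-x^2 - t/x^2) on the real line (value at the single point 0
  set to its limit 0; irrelevant for the integrals).\<close>
definition wt :: "real \<Rightarrow> real \<Rightarrow> real" where
  "wt t x = (if x = 0 then 0 else exp (- x\<^sup>2 - t / x\<^sup>2))"

definition vp :: "real \<Rightarrow> complex \<Rightarrow> complex" where
  "vp t z = 2 * z - 2 * complex_of_real t / z ^ 3"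

definition monic_orth :: "real \<Rightarrow> (nat \<Rightarrow> real poly) \<Rightarrow> bool" where
  "monic_orth t P \<longleftrightarrow>
     (\<forall>n. degree (P n) = n \<and> lead_coeff (P n) = 1) \<and>
     (\<forall>m n. m \<noteq> n \<longrightarrow> (LINT x|lborel. poly (P m) x * poly (P n) x * wt t x) = 0)"

definition hn :: "real \<Rightarrow> (nat \<Rightarrow> real poly) \<Rightarrow> nat \<Rightarrow> real" where
  "hn t P n = (LINT x|lborel. (poly (P n) x)\<^sup>2 * wt t x)"

text \<open>Convention P_{-1} = 0: the polynomial P_{n-1} and its norm h_{n-1}
  (for n = 0 the polynomial is 0, and h_{-1} is set to 1; it only multiplies 0).\<close>
definition Pprev :: "(nat \<Rightarrow> real poly) \<Rightarrow> nat \<Rightarrow> real poly" where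
  "Pprev P n = (if n = 0 then 0 else P (n - 1))"

definition hprev :: "real \<Rightarrow> (nat \<Rightarrow> real poly) \<Rightarrow> nat \<Rightarrow> real" where
  "hprev t P n = (if n = 0 then 1 else hn t P (n - 1))"

definition An :: "real \<Rightarrow> (nat \<Rightarrow> real poly) \<Rightarrow> nat \<Rightarrow> complex \<Rightarrow> complex" where
  "An t P n z = (1 / complex_of_real (hn t P n)) *
     (LINT y|lborel. ((vp t z - vp t (complex_of_real y)) / (z - complex_of_real y))
        * complex_of_real ((poly (P n) y)\<^sup>2 * wt t y))"

definition Bn :: "real \<Rightarrow> (nat \<Rightarrow> real poly) \<Rightarrow> nat \<Rightarrow> complex \<Rightarrow> complex" where
  "Bn t P n z = (1 / complex_of_real (hprev t P n)) *
     (LINT y|lborel. ((vp t z - vp t (complex_of_real y)) / (z - complex_of_real y))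
        * complex_of_real (poly (P n) y * poly (Pprev P n) y * wt t y))"

definition Rn :: "real \<Rightarrow> (nat \<Rightarrow> real poly) \<Rightarrow> nat \<Rightarrow> real" where
  "Rn t P n = (2 * t / hn t P n) * (LINT y|lborel. (1 / y\<^sup>2) * (poly (P n) y)\<^sup>2 * wt t y)"

definition rn :: "real \<Rightarrow> (nat \<Rightarrow> real poly) \<Rightarrow> nat \<Rightarrow> real" where
  "rn t P n = (2 * t / hprev t P n) *
     (LINT y|lborel. (1 / y ^ 3) * poly (P n) y * poly (Pprev P n) y * wt t y)"

end

theory Submission
  imports Defs "HOL-Probability.Probability"
begin

lemma wt_meas[measurable]: "wt t \<in> borel_measurable borel"
  unfolding wt_def by measurable

lemma exp_bound:
  fixes t x :: real assumes "t > 0" "x \<noteq> 0"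
  shows "exp (- t / x\<^sup>2) \<le> 4 * x^4 / t\<^sup>2"
proof -
  define s where "s = t / x\<^sup>2"
  have s: "s > 0" using assms by (simp add: s_def)
  have "exp s = exp (s/2)^2" by (simp add: power2_eq_square flip: exp_add)
  moreover have "1 + s/2 \<le> exp (s/2)" by simp
  ultimately have "(1 + s/2)^2 \<le> exp s" using s by (metis power_mono less_eq_real_def add_pos_pos zero_less_one half_gt_zero)
  moreover have "s^2/4 \<le> (1 + s/2)^2" using s by (simp add: power2_eq_square field_simps)
  ultimately have e: "s^2/4 \<le> exp s" by linarith
  have "exp (- t / x\<^sup>2) = 1 / exp s" by (simp add: s_def exp_minus field_simps)
  also have "\<dots> \<le> 1 / (s^2/4)" using e s by (intro divide_left_mono) auto
  also have "\<dots> = 4 * x^4 / t\<^sup>2" using assms by (simp add: s_def field_simps power2_eq_square eval_nat_numeral)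
  finally show ?thesis .
qed

lemma integ_mon:
  fixes t :: real assumes "t > 0" "k \<le> 4"
  shows "integrable lborel (\<lambda>x. x^i * wt t x / x^k)"
proof -
  let ?C = "4 / t\<^sup>2 * sqrt (2*pi)"
  have 1: "integrable lborel (\<lambda>x. ?C * (std_normal_density x * \<bar>x\<bar>^(i+4-k)))"
    by (intro integrable_mult_right integrable_std_normal_moment_abs)
  have 2: "(\<lambda>x. x^i * wt t x / x^k) \<in> borel_measurable lborel" by measurable
  have 3: "AE x in lborel. norm (x^i * wt t x / x^k) \<le> norm (?C * (std_normal_density x * \<bar>x\<bar>^(i+4-k)))"
  proof (intro AE_I2)
    fix x :: real
    show "norm (x^i * wt t x / x^k) \<le> norm (?C * (std_normal_density x * \<bar>x\<bar>^(i+4-k)))"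
    proof (cases "x = 0")
      case True then show ?thesis by (simp add: wt_def)
    next
      case False
      have a: "\<bar>x\<bar>^4 / \<bar>x\<bar>^k = \<bar>x\<bar>^(4-k)" using power_diff[of "\<bar>x\<bar>" k 4] False assms by simp
      have w: "wt t x = exp (-x\<^sup>2) * exp (- t / x\<^sup>2)" using False
        unfolding wt_def using exp_add[of "-x\<^sup>2" "-t/x\<^sup>2"] by simp
      have "norm (x^i * wt t x / x^k) = \<bar>x\<bar>^i * exp (-x\<^sup>2) * exp (- t / x\<^sup>2) / \<bar>x\<bar>^k"
        unfolding w by (simp add: abs_mult power_abs)
      also have "\<dots> \<le> \<bar>x\<bar>^i * exp (-x\<^sup>2) * (4 * \<bar>x\<bar>^4 / t\<^sup>2) / \<bar>x\<bar>^k"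
        using exp_bound[OF assms(1) False] power_even_abs[of 4 x] by (intro divide_right_mono mult_left_mono) auto
      also have "\<dots> = 4 / t\<^sup>2 * exp (-x\<^sup>2) * (\<bar>x\<bar>^i * (\<bar>x\<bar>^4 / \<bar>x\<bar>^k))"
        using False by (simp add: field_simps pos_divide_le_eq)
      also have "\<dots> = 4 / t\<^sup>2 * exp (-x\<^sup>2) * \<bar>x\<bar>^(i+4-k)"
        using assms by (simp only: a power_add[symmetric] Nat.add_diff_assoc)
      also have "\<dots> \<le> 4 / t\<^sup>2 * exp (-x\<^sup>2/2) * \<bar>x\<bar>^(i+4-k)"
        by (intro mult_right_mono mult_left_mono) auto
      also have "\<dots> = norm (?C * (std_normal_density x * \<bar>x\<bar>^(i+4-k)))"
        by (simp add: std_normal_density_def abs_mult)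
      finally show ?thesis .
    qed
  qed
  show ?thesis by (rule Bochner_Integration.integrable_bound[OF 1 2 3])
qed

lemma integ_poly:
  fixes t :: real assumes "t > 0" "k \<le> 4"
  shows "integrable lborel (\<lambda>x. poly p x * wt t x / x^k)"
proof -
  have "(\<lambda>x. poly p x * wt t x / x^k) = (\<lambda>x. \<Sum>i\<le>degree p. coeff p i * (x^i * wt t x / x^k))"
    by (simp add: poly_altdef sum_distrib_right sum_divide_distrib mult.assoc)
  then show ?thesis apply (simp only:)
    apply (rule Bochner_Integration.integrable_sum)
    apply (rule integrable_mult_right)
    apply (rule integ_mon[OF assms])
    done
qed

lemma wt_even: "wt t (-x) = wt t x" by (simp add: wt_def)

lemma integ2:
  assumes "t > 0" shows "integrable lborel (\<lambda>x. poly p x * poly q x * wt t x)"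
  using integ_poly[OF assms, of 0 "p*q"] by simp

lemma integ_k:
  assumes "t > 0" "k \<le> 4" shows "integrable lborel (\<lambda>x. poly p x * poly q x * wt t x / x^k)"
  using integ_poly[OF assms, of "p*q"] by simp

lemma reflect_int: fixes g :: "real \<Rightarrow> 'a::{banach, second_countable_topology}" shows "(LINT x|lborel. g x) = (LINT x|lborel. g (- x))"
  using lborel_integral_real_affine[of "-1" g 0] by simp

lemma odd_int: fixes g :: "real \<Rightarrow> real" assumes "\<And>x. g (-x) = - g x" shows "(LINT x|lborel. g x) = (0::real)"
proof -
  have "(LINT x|lborel. g x) = (LINT x|lborel. - g x)" using reflect_int[of g] assms by simp
  then show ?thesis by simp
qed

lemma pos_int:
  assumes "t > 0" "(LINT x|lborel. poly q x * poly q x * wt t x) = 0"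
  shows "q = 0"
proof (rule ccontr)
  assume q: "q \<noteq> 0"
  have A: "AE x in lborel. poly q x * poly q x * wt t x = 0"
    using assms integ2[OF assms(1), of q q]
    by (subst (asm) integral_nonneg_eq_0_iff_AE) (auto simp: wt_def)
  have B: "AE x in lborel. x \<notin> insert 0 {x. poly q x = 0}"
    using q by (intro AE_not_in finite_imp_null_set_lborel) (auto simp: poly_roots_finite)
  have "AE (x::real) in lborel. False"
    by (rule eventually_mono[OF eventually_conj[OF A B]]) (auto simp: wt_def)
  then have "ae_filter (lborel::real measure) = bot" using trivial_limit_def by blast
  then show False by (simp add: ae_filter_eq_bot_iff)
qed


definition I2 :: "real \<Rightarrow> real poly \<Rightarrow> real poly \<Rightarrow> real" where
  "I2 t p q = (LINT x|lborel. poly p x * poly q x * wt t x)"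

lemma I2_add: "t > 0 \<Longrightarrow> I2 t f (q + r) = I2 t f q + I2 t f r"
  unfolding I2_def using integ2[of t f q] integ2[of t f r]
  by (simp add: distrib_left distrib_right integral_add[symmetric])

lemma I2_smult: "I2 t f (smult c q) = c * I2 t f q"
proof -
  have "I2 t f (smult c q) = (LINT x|lborel. c * (poly f x * poly q x * wt t x))"
    unfolding I2_def by (intro Bochner_Integration.integral_cong) auto
  then show ?thesis unfolding I2_def by simp
qed

lemma I2_comm: "I2 t f q = I2 t q f"
  unfolding I2_def by (simp add: mult.commute mult.left_commute)

lemma mo_deg: "monic_orth t P \<Longrightarrow> degree (P n) = n \<and> coeff (P n) n = 1 \<and> lead_coeff (P n) = 1"
  unfolding monic_orth_def by metis

lemma deg_cancel:
  fixes q :: "real poly"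
  assumes "degree q \<le> d" "coeff q d = 0"
  shows "q = 0 \<or> degree q < d"
  using assms by (metis le_neq_implies_less leading_coeff_0_iff)

lemma orth_low:
  assumes t: "t > 0" and mo: "monic_orth t P"
    and f: "\<And>m. m < n \<Longrightarrow> I2 t f (P m) = 0"
  shows "(q = 0 \<or> degree q < n) \<Longrightarrow> I2 t f q = 0"
proof -
  have "\<forall>q. (q = 0 \<or> degree q < d) \<longrightarrow> d \<le> n \<longrightarrow> I2 t f q = 0" for d
  proof (induction d)
    case 0 then show ?case by (auto simp: I2_def)
  next
    case (Suc d)
    show ?case
    proof (intro allI impI)
      fix q :: "real poly" assume q: "q = 0 \<or> degree q < Suc d" and dn: "Suc d \<le> n"
      define c where "c = coeff q d"
      define q' where "q' = q - smult c (P d)"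
      have Pd: "degree (P d) = d" "coeff (P d) d = 1" using mo_deg[OF mo] by auto
      have "degree q' \<le> d" unfolding q'_def using q Pd
        by (intro degree_diff_le) (auto simp: degree_smult_le intro: order.trans[OF degree_smult_le])
      moreover have "coeff q' d = 0" unfolding q'_def c_def using Pd by simp
      ultimately have "q' = 0 \<or> degree q' < d" by (rule deg_cancel)
      then have "I2 t f q' = 0" using Suc.IH dn by auto
      moreover have "I2 t f (P d) = 0" using f dn by auto
      moreover have "q = q' + smult c (P d)" unfolding q'_def by simp
      ultimately show "I2 t f q = 0" using I2_add[OF t] I2_smult by simp
    qed
  qed
  then show "(q = 0 \<or> degree q < n) \<Longrightarrow> I2 t f q = 0" by auto
qed

lemma orth_P:
  assumes "monic_orth t P" "m \<noteq> n" shows "I2 t (P n) (P m) = 0"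
  using assms unfolding monic_orth_def I2_def by (simp add: mult.commute)

lemma orth_Pn:
  assumes t: "t > 0" and mo: "monic_orth t P" and "q = 0 \<or> degree q < n"
  shows "I2 t (P n) q = 0"
  using orth_low[OF t mo, of n "P n" q] orth_P[OF mo] assms(3) by auto

lemma parity:
  assumes t: "t > 0" and mo: "monic_orth t P"
  shows "poly (P n) (-x) = (-1)^n * poly (P n) x"
proof (induction n arbitrary: x rule: less_induct)
  case (less n)
  define R where "R = pcompose (P n) [:0, -1:]"
  define Q where "Q = P n - smult ((-1)^n) R"
  have Pn: "degree (P n) = n" "lead_coeff (P n) = 1" using mo_deg[OF mo] by auto
  have polyR: "poly R x = poly (P n) (-x)" for x unfolding R_def by (simp add: poly_pcompose)
  have dR: "degree R = n" unfolding R_def using Pn by (simp add: degree_pcompose)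
  have lR: "coeff R n = (-1)^n" using lead_coeff_comp[of "[:0, -1:]" "P n"] dR Pn
    unfolding R_def by simp
  have "degree Q \<le> n" unfolding Q_def using Pn dR
    by (intro degree_diff_le) (auto intro: order.trans[OF degree_smult_le])
  moreover have "coeff Q n = 0" unfolding Q_def using Pn lR
    by (simp flip: power_mult_distrib)
  ultimately have Qd: "Q = 0 \<or> degree Q < n" by (rule deg_cancel)
  have QP: "I2 t Q (P m) = 0" if m: "m < n" for m
  proof -
    have "I2 t R (P m) = (LINT x|lborel. poly (P n) (-x) * poly (P m) x * wt t x)"
      unfolding I2_def polyR ..
    also have "\<dots> = (LINT x|lborel. poly (P n) x * poly (P m) (-x) * wt t (-x))"
      by (subst reflect_int) simp
    also have "\<dots> = (LINT x|lborel. (-1)^m * (poly (P n) x * poly (P m) x * wt t x))"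
      using less[OF m] by (simp add: wt_even mult_ac)
    also have "\<dots> = (-1)^m * I2 t (P n) (P m)" unfolding I2_def by simp
    also have "\<dots> = 0" using orth_P[OF mo] m by simp
    finally have "I2 t R (P m) = 0" .
    moreover have "Q = P n + smult (-((-1)^n)) R" unfolding Q_def by simp
    ultimately show ?thesis using I2_add[OF t] I2_smult I2_comm orth_P[OF mo] m
      by (metis add.right_neutral mult_zero_right less_irrefl)
  qed
  have "I2 t Q Q = 0" using orth_low[OF t mo QP Qd] .
  then have "Q = 0" using pos_int[OF t] unfolding I2_def by blast
  then have "poly Q x = 0" by simp
  then show ?case unfolding Q_def by (simp add: polyR)
qed

lemma hn_nz:
  assumes t: "t > 0" and mo: "monic_orth t P" shows "hn t P n \<noteq> 0"
proof
  assume "hn t P n = 0"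
  then have "I2 t (P n) (P n) = 0" unfolding hn_def I2_def by (simp add: power2_eq_square)
  then have "P n = 0" using pos_int[OF t] unfolding I2_def by blast
  moreover have "lead_coeff (P n) = 1" using mo_deg[OF mo] by auto
  ultimately show False by simp
qed


lemma kernel0:
  fixes z Y T :: complex
  assumes "z \<noteq> 0" "Y \<noteq> 0" "Y \<noteq> z"
  shows "(2 * z - 2 * T / z ^ 3 - (2 * Y - 2 * T / Y ^ 3)) / (z - Y)
    = 2 + (2 * T / z) * (1 / Y^3) + (2 * T / z^2) * (1 / Y^2) + (2 * T / z^3) * (1 / Y)"
proof -
  have d: "z - Y \<noteq> 0" using assms by simp
  have "(2 * z - 2 * T / z ^ 3 - (2 * Y - 2 * T / Y ^ 3)) = (z - Y) * (2 + (2 * T / z) * (1 / Y^3) + (2 * T / z^2) * (1 / Y^2) + (2 * T / z^3) * (1 / Y))"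
    using assms d by (simp add: field_simps) algebra
  then show ?thesis using d by simp
qed

lemma kernel:
  fixes z :: complex and y :: real
  assumes "z \<noteq> 0" "y \<noteq> 0" "complex_of_real y \<noteq> z"
  shows "(vp t z - vp t (complex_of_real y)) / (z - complex_of_real y)
    = 2 + (2 * of_real t / z) * of_real (1 / y^3) + (2 * of_real t / z^2) * of_real (1 / y^2)
        + (2 * of_real t / z^3) * of_real (1 / y)"
proof -
  have d: "z - complex_of_real y \<noteq> 0" using assms by simp
  have y: "complex_of_real y \<noteq> 0" using assms by simp
  show ?thesis unfolding vp_def using kernel0[OF assms(1) y assms(3), of "of_real t"] by simp
qed


definition G :: "real \<Rightarrow> real poly \<Rightarrow> nat \<Rightarrow> real" where
  "G t p k = (LINT y|lborel. poly p y * wt t y / y^k)"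

lemma poly_meas[measurable]: "poly (p::real poly) \<in> borel_measurable borel"
  by (rule borel_measurable_continuous_onI) (use continuous_on_poly[OF continuous_on_id, of UNIV p] in simp)

lemma wt_meas2[measurable]: "wt t \<in> borel_measurable lborel"
  using wt_meas by simp

lemma kernel_int:
  assumes t: "t > 0" and z: "z \<noteq> 0"
  shows "(LINT y|lborel. ((vp t z - vp t (complex_of_real y)) / (z - complex_of_real y))
            * complex_of_real (poly p y * wt t y))
    = 2 * of_real (G t p 0) + (2 * of_real t / z) * of_real (G t p 3)
      + (2 * of_real t / z^2) * of_real (G t p 2) + (2 * of_real t / z^3) * of_real (G t p 1)"
proof -
  let ?F = "\<lambda>k y. complex_of_real (poly p y * wt t y / y^k)"
  have i: "integrable lborel (?F k)" if "k \<le> 4" for k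
    using integ_poly[OF t that, of p] by (intro integrable_of_real)
  have "(LINT y|lborel. ((vp t z - vp t (complex_of_real y)) / (z - complex_of_real y))
            * complex_of_real (poly p y * wt t y))
     = (LINT y|lborel. 2 * ?F 0 y + (2 * of_real t / z) * ?F 3 y
      + (2 * of_real t / z^2) * ?F 2 y + (2 * of_real t / z^3) * ?F 1 y)"
  proof (rule integral_cong_AE)
    show "(\<lambda>y. ((vp t z - vp t (complex_of_real y)) / (z - complex_of_real y))
            * complex_of_real (poly p y * wt t y)) \<in> borel_measurable lborel"
      unfolding vp_def by measurable
    show "(\<lambda>y. 2 * ?F 0 y + (2 * of_real t / z) * ?F 3 y
      + (2 * of_real t / z^2) * ?F 2 y + (2 * of_real t / z^3) * ?F 1 y) \<in> borel_measurable lborel"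
      by measurable
    show "AE y in lborel. ((vp t z - vp t (complex_of_real y)) / (z - complex_of_real y))
            * complex_of_real (poly p y * wt t y) = 2 * ?F 0 y + (2 * of_real t / z) * ?F 3 y
      + (2 * of_real t / z^2) * ?F 2 y + (2 * of_real t / z^3) * ?F 1 y"
      using AE_lborel_singleton[of "Re z"]
    proof eventually_elim
      case (elim y)
      show ?case
      proof (cases "y = 0")
        case True then show ?thesis by (simp add: wt_def)
      next
        case False
        have "complex_of_real y \<noteq> z" using elim by auto
        then show ?thesis using kernel[OF z False] by (simp add: algebra_simps)
      qed
    qed
  qed
  also have "\<dots> = 2 * of_real (G t p 0) + (2 * of_real t / z) * of_real (G t p 3)
      + (2 * of_real t / z^2) * of_real (G t p 2) + (2 * of_real t / z^3) * of_real (G t p 1)"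
    using i[of 0] i[of 1] i[of 2] i[of 3] unfolding G_def
    by (simp add: integral_add del: of_real_divide of_real_mult)
  finally show ?thesis .
qed


lemma G_odd:
  assumes "\<And>y. poly p (-y) = (-1)^j * poly p y" "odd (j + k)"
  shows "G t p k = 0"
  unfolding G_def
proof (rule odd_int)
  fix y :: real
  have "(-1::real)^j / (-1)^k = - 1" using assms(2)
    by (cases "even j") (auto simp: power_minus_odd)
  then show "poly p (- y) * wt t (- y) / (- y) ^ k = - (poly p y * wt t y / y ^ k)"
  proof (cases "y = 0")
    case True then show ?thesis by (simp add: wt_def)
  next
    case False
    have "poly p (- y) * wt t (- y) / (- y) ^ k = ((-1)^j / (-1)^k) * (poly p y * wt t y / y ^ k)"
      using False by (simp add: assms(1) wt_even power_minus[of y k])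
    then show ?thesis using \<open>(-1::real)^j / (-1)^k = - 1\<close> by simp
  qed
qed

lemma zero_factor:
  assumes "poly q 0 = (0::real)" "q \<noteq> 0"
  obtains S where "q = [:0,1:] * S" "degree S + 1 = degree q" "lead_coeff S = lead_coeff q"
proof -
  from assms obtain S where S: "q = [:0,1:] * S" using poly_eq_0_iff_dvd[of q 0] by auto
  then have "S \<noteq> 0" using assms by auto
  then have "degree q = degree S + 1" "lead_coeff q = lead_coeff S" using S
    by (simp_all add: degree_mult_eq lead_coeff_mult)
  then show ?thesis using that S by simp
qed

lemma div_y: "poly ([:0,1:] * S) y * r * wt t y / y = poly S y * r * wt t y"
  by (cases "y = 0") (auto simp: wt_def)

lemma G1:
  assumes t: "t > 0" and mo: "monic_orth t P"
  shows "G t (P (Suc m) * P m) 1 = (if odd (Suc m) then hn t P m else 0)"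
proof (cases "odd (Suc m)")
  case True
  let ?n = "Suc m"
  have p0: "poly (P ?n) 0 = 0" using parity[OF t mo, of ?n 0] True by simp
  have nz: "P ?n \<noteq> 0" using mo_deg[OF mo, of ?n] by auto
  obtain S where S: "P ?n = [:0,1:] * S" "degree S + 1 = degree (P ?n)" "lead_coeff S = lead_coeff (P ?n)"
    using zero_factor[OF p0 nz] by blast
  have dS: "degree S = m" "coeff S m = 1" using S(2,3) mo_deg[OF mo, of ?n] by auto
  have "G t (P ?n * P m) 1 = I2 t S (P m)"
    unfolding G_def I2_def S(1)
    by (intro Bochner_Integration.integral_cong refl) (auto simp: wt_def)
  also have "\<dots> = I2 t (P m) S" by (rule I2_comm)
  also have "S = P m + (S - P m)" by simp
  also have "I2 t (P m) (P m + (S - P m)) = I2 t (P m) (P m) + I2 t (P m) (S - P m)"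
    by (rule I2_add[OF t])
  also have "I2 t (P m) (S - P m) = 0"
  proof (rule orth_Pn[OF t mo])
    have "degree (S - P m) \<le> m" using dS mo_deg[OF mo, of m] by (intro degree_diff_le) auto
    moreover have "coeff (S - P m) m = 0" using dS mo_deg[OF mo, of m] by simp
    ultimately show "S - P m = 0 \<or> degree (S - P m) < m" by (rule deg_cancel)
  qed
  also have "I2 t (P m) (P m) = hn t P m" unfolding I2_def hn_def by (simp add: power2_eq_square)
  finally show ?thesis using True by simp
next
  case False
  then have om: "odd m" by simp
  have p0: "poly (P m) 0 = 0" using parity[OF t mo, of m 0] om by simp
  have nz: "P m \<noteq> 0" using mo_deg[OF mo, of m] by auto
  obtain S where S: "P m = [:0,1:] * S" "degree S + 1 = degree (P m)" "lead_coeff S = lead_coeff (P m)"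
    using zero_factor[OF p0 nz] by blast
  have "G t (P (Suc m) * P m) 1 = I2 t (P (Suc m)) S"
    unfolding G_def I2_def S(1)
    by (intro Bochner_Integration.integral_cong refl) (auto simp: wt_def)
  also have "\<dots> = 0"
    by (rule orth_Pn[OF t mo]) (use S(2) mo_deg[OF mo, of m] in auto)
  finally show ?thesis using False by simp
qed


theorem mainTheorem1:
  fixes t :: real and P :: "nat \<Rightarrow> real poly" and n :: nat and z :: complex
  assumes "t > 0" and "monic_orth t P" and "z \<noteq> 0"
  shows "An t P n z = 2 + complex_of_real (Rn t P n) / z\<^sup>2
     \<and> Bn t P n z = complex_of_real (rn t P n) / z
          + complex_of_real ((1 - (-1) ^ n) * t) / z ^ 3"
proof
  note t = assms(1) and mo = assms(2) and z = assms(3)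
  have hnz: "hn t P k \<noteq> 0" for k by (rule hn_nz[OF t mo])
  show "An t P n z = 2 + complex_of_real (Rn t P n) / z\<^sup>2"
  proof -
    let ?p = "P n ^ 2"
    have par: "poly ?p (-y) = (-1)^0 * poly ?p y" for y
      by (simp add: parity[OF t mo] power_mult_distrib flip: power_mult)
    have G0: "G t ?p 0 = hn t P n" unfolding G_def hn_def by simp
    have G1: "G t ?p 1 = 0" by (rule G_odd[OF par]) simp
    have G3: "G t ?p 3 = 0" by (rule G_odd[OF par]) simp
    have G2: "Rn t P n = 2 * t / hn t P n * G t ?p 2" unfolding Rn_def G_def
      by (simp add: field_simps)
    have "An t P n z = (1 / complex_of_real (hn t P n)) *
       (2 * of_real (G t ?p 0) + (2 * of_real t / z) * of_real (G t ?p 3)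
      + (2 * of_real t / z^2) * of_real (G t ?p 2) + (2 * of_real t / z^3) * of_real (G t ?p 1))"
      unfolding An_def using kernel_int[OF t z, of ?p] by (simp add: poly_power)
    also have "\<dots> = 2 + complex_of_real (Rn t P n) / z\<^sup>2"
      unfolding G0 G1 G3 G2 using hnz[of n] z by (simp add: field_simps)
    finally show ?thesis .
  qed
  show "Bn t P n z = complex_of_real (rn t P n) / z
          + complex_of_real ((1 - (-1) ^ n) * t) / z ^ 3"
  proof (cases n)
    case 0
    then show ?thesis by (simp add: Bn_def rn_def Pprev_def)
  next
    case (Suc m)
    let ?p = "P n * P m"
    have par: "poly ?p (-y) = (-1)^(n+m) * poly ?p y" for y
      by (simp add: parity[OF t mo] power_add)
    have G0: "G t ?p 0 = 0" unfolding G_def using orth_P[OF mo, of m n] Suc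
      by (simp add: I2_def mult.assoc)
    have G2: "G t ?p 2 = 0" by (rule G_odd[OF par]) (simp add: Suc)
    have G1: "G t ?p 1 = (if odd n then hn t P m else 0)" using G1[OF t mo, of m] Suc by simp
    have G3: "rn t P n = 2 * t / hn t P m * G t ?p 3" unfolding rn_def G_def
      using Suc by (simp add: field_simps Pprev_def hprev_def)
    have "Bn t P n z = (1 / complex_of_real (hn t P m)) *
       (2 * of_real (G t ?p 0) + (2 * of_real t / z) * of_real (G t ?p 3)
      + (2 * of_real t / z^2) * of_real (G t ?p 2) + (2 * of_real t / z^3) * of_real (G t ?p 1))"
      unfolding Bn_def using kernel_int[OF t z, of ?p] Suc by (simp add: Pprev_def hprev_def)
    also have "\<dots> = complex_of_real (rn t P n) / z
          + complex_of_real ((1 - (-1) ^ n) * t) / z ^ 3"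
      unfolding G0 G1 G3 G2 using hnz[of m] z by (cases "odd n") (simp_all add: field_simps)
    finally show ?thesis .
  qed
qed

end
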